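(* For $c>0$ let $$\Theta_2(c)=\Big\{\theta\in\Theta_2:\ (\mu_2-\mu_1)^2\,(a_1\wedge (n-a_1))>c\sigma^2\log\log (16n)\Big\},$$ where $\theta_i=\mu_1$ for $i\le a_1$ and $\theta_i=\mu_2$ for $i>a_1$. There exist universal constants $c>0$ (small enough) and $c_1\in(0,1)$ such that $$\inf_{0\leq \phi\leq 1}\Big\{\sup_{\theta\in\Theta_1}\mathbb{E}_\theta\phi+\sup_{\theta\in\Theta_2(c)}\mathbb{E}_{\theta}(1-\phi)\Big\}\geq c_1,$$ where $\mathbb{E}_\theta$ is expectation under $X\sim N(\theta,\sigma^2I_n)$ and the infimum is over all measurable test functions $\phi=\phi(X)\in[0,1]$.
   Context: $\Theta_1=\{\theta\in\mathbb{R}^n:\theta_1=\cdots=\theta_n\}$. $\Theta_2$ is the set of $\theta\in\mathbb{R}^n$ for which there exist an integer $0\le a_1\le n$ and reals $\mu_1,\mu_2$ with $\theta_i=\mu_1$ for $1\le i\le a_1$ and $\theta_i=\mu_2$ for $a_1<i\le n$; in the definition of $\Theta_2(c)$, $(\mu_1,\mu_2,a_1)$ is such a representation of $\theta$. *)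

theory Defs
  imports "HOL-Probability.Probability"
begin

text \<open>Vectors in R^n are functions nat => real, only coordinates i < n matter
  (coordinate i here corresponds to coordinate i+1 in the paper).\<close>

definition gauss_meas :: "nat \<Rightarrow> (nat \<Rightarrow> real) \<Rightarrow> real \<Rightarrow> (nat \<Rightarrow> real) measure" where
  "gauss_meas n \<theta> \<sigma> = PiM {..<n} (\<lambda>i. density lborel (normal_density (\<theta> i) \<sigma>))"

definition Theta1 :: "nat \<Rightarrow> (nat \<Rightarrow> real) set" where
  "Theta1 n = {\<theta>. \<forall>i<n. \<forall>j<n. \<theta> i = \<theta> j}"

definition Theta2 :: "nat \<Rightarrow> (nat \<Rightarrow> real) set" where
  "Theta2 n = {\<theta>. \<exists>a1 \<mu>1 \<mu>2. a1 \<le> n \<and> (\<forall>i<n. \<theta> i = (if i < a1 then \<mu>1 else \<mu>2))}"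

definition Theta2c :: "nat \<Rightarrow> real \<Rightarrow> real \<Rightarrow> (nat \<Rightarrow> real) set" where
  "Theta2c n \<sigma> c = {\<theta> \<in> Theta2 n. \<exists>a1 \<mu>1 \<mu>2. a1 \<le> n \<and> (\<forall>i<n. \<theta> i = (if i < a1 then \<mu>1 else \<mu>2)) \<and>
      (\<mu>2 - \<mu>1)\<^sup>2 * real (min a1 (n - a1)) > c * \<sigma>\<^sup>2 * ln (ln (16 * real n))}"

definition is_test :: "nat \<Rightarrow> ((nat \<Rightarrow> real) \<Rightarrow> real) \<Rightarrow> bool" where
  "is_test n \<phi> \<longleftrightarrow> \<phi> \<in> borel_measurable (PiM {..<n} (\<lambda>_. lborel)) \<and>
     (\<forall>x \<in> space (PiM {..<n} (\<lambda>_. lborel :: real measure)). 0 \<le> \<phi> x \<and> \<phi> x \<le> 1)"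

end

theory Submission
  imports Defs
begin

lemma psf_lborel: "product_sigma_finite (\<lambda>_::nat. lborel :: real measure)"
  by (simp add: product_sigma_finite_def lborel.sigma_finite_measure_axioms)

lemma psf_gauss: "\<sigma> > 0 \<Longrightarrow> product_sigma_finite (\<lambda>i::nat. density lborel (normal_density (\<theta> i) \<sigma>))"
  unfolding product_sigma_finite_def
  using prob_space_normal_density prob_space_imp_sigma_finite by metis

definition pdens :: "nat \<Rightarrow> (nat \<Rightarrow> real) \<Rightarrow> real \<Rightarrow> (nat \<Rightarrow> real) \<Rightarrow> real" where
  "pdens n \<theta> \<sigma> x = (\<Prod>i<n. normal_density (\<theta> i) \<sigma> (x i))"

lemma pdens_meas[measurable]: "pdens n \<theta> \<sigma> \<in> borel_measurable (PiM {..<n} (\<lambda>_. lborel))"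
  unfolding pdens_def by measurable

lemma pdens_nonneg: "0 \<le> pdens n \<theta> \<sigma> x"
  unfolding pdens_def by (simp add: prod_nonneg)

lemma gauss_density: assumes sp: "\<sigma> > 0" shows
  "gauss_meas n \<theta> \<sigma> = density (PiM {..<n} (\<lambda>_. lborel)) (\<lambda>x. ennreal (pdens n \<theta> \<sigma> x))"
  unfolding gauss_meas_def
proof (rule product_sigma_finite.PiM_eqI[OF psf_gauss[OF sp], symmetric])
  show "finite {..<n}" by simp
  show "sets (density (PiM {..<n} (\<lambda>_. lborel)) (\<lambda>x. ennreal (pdens n \<theta> \<sigma> x))) =
        sets (PiM {..<n} (\<lambda>i. density lborel (normal_density (\<theta> i) \<sigma>)))"
    unfolding sets_density by (rule sets_PiM_cong) simp_all
  fix A assume A: "\<And>i. i \<in> {..<n} \<Longrightarrow> A i \<in> sets (density lborel (normal_density (\<theta> i) \<sigma>))"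
  then have A': "\<And>i. i \<in> {..<n} \<Longrightarrow> A i \<in> sets lborel" by simp
  have S: "Pi\<^sub>E {..<n} A \<in> sets (PiM {..<n} (\<lambda>_. lborel :: real measure))"
    using A' by (intro sets_PiM_I_finite) auto
  have "emeasure (density (PiM {..<n} (\<lambda>_. lborel)) (\<lambda>x. ennreal (pdens n \<theta> \<sigma> x))) (Pi\<^sub>E {..<n} A)
      = (\<integral>\<^sup>+ x. ennreal (pdens n \<theta> \<sigma> x) * indicator (Pi\<^sub>E {..<n} A) x \<partial>PiM {..<n} (\<lambda>_. lborel))"
    using S by (intro emeasure_density) auto
  also have "\<dots> = (\<integral>\<^sup>+ x. (\<Prod>i<n. ennreal (normal_density (\<theta> i) \<sigma> (x i)) * indicator (A i) (x i)) \<partial>PiM {..<n} (\<lambda>_. lborel))"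
  proof (rule nn_integral_cong)
    fix x assume x: "x \<in> space (PiM {..<n} (\<lambda>_. lborel :: real measure))"
    have "indicator (Pi\<^sub>E {..<n} A) x = (\<Prod>i<n. indicator (A i) (x i) :: ennreal)"
    proof (cases "x \<in> Pi\<^sub>E {..<n} A")
      case True then show ?thesis by (auto simp: indicator_def PiE_def Pi_def)
    next
      case False
      then obtain i where "i < n" "x i \<notin> A i" using x by (auto simp: space_PiM PiE_def Pi_def)
      then show ?thesis using False by (auto simp: indicator_def intro!: prod_zero bexI[of _ i])
    qed
    then show "ennreal (pdens n \<theta> \<sigma> x) * indicator (Pi\<^sub>E {..<n} A) x = (\<Prod>i<n. ennreal (normal_density (\<theta> i) \<sigma> (x i)) * indicator (A i) (x i))"
      unfolding pdens_def by (simp add: prod_ennreal[symmetric] prod.distrib)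
  qed
  also have "\<dots> = (\<Prod>i<n. \<integral>\<^sup>+ y. ennreal (normal_density (\<theta> i) \<sigma> y) * indicator (A i) y \<partial>lborel)"
    using A' by (intro product_sigma_finite.product_nn_integral_prod[OF psf_lborel]) auto
  also have "\<dots> = (\<Prod>i<n. emeasure (density lborel (normal_density (\<theta> i) \<sigma>)) (A i))"
    using A' by (intro prod.cong refl) (simp add: emeasure_density)
  finally show "emeasure (density (PiM {..<n} (\<lambda>_. lborel)) (\<lambda>x. ennreal (pdens n \<theta> \<sigma> x))) (Pi\<^sub>E {..<n} A) =
        (\<Prod>i<n. emeasure (density lborel (normal_density (\<theta> i) \<sigma>)) (A i))" .
qed

abbreviation Q :: "nat \<Rightarrow> (nat \<Rightarrow> real) measure" where
  "Q n \<equiv> PiM {..<n} (\<lambda>_. lborel)"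

lemma sets_gauss: "sets (gauss_meas n \<theta> \<sigma>) = sets (Q n)"
  unfolding gauss_meas_def by (rule sets_PiM_cong) simp_all

lemma expect_eq:
  assumes sp: "\<sigma> > 0" and f: "f \<in> borel_measurable (Q n)"
  shows "(\<integral>x. f x \<partial>gauss_meas n \<theta> \<sigma>) = (\<integral>x. pdens n \<theta> \<sigma> x * f x \<partial>Q n)"
  unfolding gauss_density[OF sp]
  by (subst integral_density) (auto simp: f pdens_nonneg)

lemma prob_gauss: "\<sigma> > 0 \<Longrightarrow> prob_space (gauss_meas n \<theta> \<sigma>)"
  unfolding gauss_meas_def by (intro prob_space_PiM prob_space_normal_density)

lemma test_meas:
  assumes "is_test n \<phi>" shows "\<phi> \<in> borel_measurable (gauss_meas n \<theta> \<sigma>)"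
  using assms unfolding is_test_def using measurable_cong_sets[OF sets_gauss refl] by blast

lemma test_le1:
  assumes sp: "\<sigma> > 0" and t: "is_test n \<phi>"
  shows "(\<integral>x. \<phi> x \<partial>gauss_meas n \<theta> \<sigma>) \<le> 1" "(\<integral>x. (1 - \<phi> x) \<partial>gauss_meas n \<theta> \<sigma>) \<le> 1"
proof -
  interpret prob_space "gauss_meas n \<theta> \<sigma>" using prob_gauss[OF sp] .
  have m: "\<phi> \<in> borel_measurable (gauss_meas n \<theta> \<sigma>)" using test_meas[OF t] .
  have b: "\<forall>x\<in>space (gauss_meas n \<theta> \<sigma>). 0 \<le> \<phi> x \<and> \<phi> x \<le> 1"
    using t unfolding is_test_def space_PiM gauss_meas_def by simp
  have i1: "integrable (gauss_meas n \<theta> \<sigma>) \<phi>"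
    by (rule integrable_const_bound[where B=1]) (use m b in auto)
  then show "(\<integral>x. \<phi> x \<partial>gauss_meas n \<theta> \<sigma>) \<le> 1"
    by (intro integral_le_const) (use b in auto)
  have i2: "integrable (gauss_meas n \<theta> \<sigma>) (\<lambda>x. 1 - \<phi> x)"
    using i1 by auto
  then show "(\<integral>x. (1 - \<phi> x) \<partial>gauss_meas n \<theta> \<sigma>) \<le> 1"
    by (intro integral_le_const) (use b in auto)
qed

lemma pdens_integrable: "\<sigma> > 0 \<Longrightarrow> integrable (Q n) (pdens n \<theta> \<sigma>)"
  unfolding pdens_def
  by (rule product_sigma_finite.product_integrable_prod[OF psf_lborel]) (auto simp: integrable_normal_density)

lemma pdens_integral: "\<sigma> > 0 \<Longrightarrow> (\<integral>x. pdens n \<theta> \<sigma> x \<partial>Q n) = 1"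
  unfolding pdens_def
  by (subst product_sigma_finite.product_integral_prod[OF psf_lborel]) (auto simp: integrable_normal_density integral_normal_density)

lemma pdens_pos: "\<sigma> > 0 \<Longrightarrow> 0 < pdens n \<theta> \<sigma> x"
  unfolding pdens_def by (simp add: prod_pos normal_density_pos)

lemma cross1:
  assumes sp: "\<sigma> > 0"
  shows "normal_density a \<sigma> x * normal_density b \<sigma> x / normal_density 0 \<sigma> x
    = exp (a * b / \<sigma>\<^sup>2) * normal_density (a + b) \<sigma> x"
proof -
  have e: "exp (-(x - a)\<^sup>2/ (2 * \<sigma>\<^sup>2)) * exp (-(x - b)\<^sup>2/ (2 * \<sigma>\<^sup>2)) / exp (-(x - 0)\<^sup>2/ (2 * \<sigma>\<^sup>2))
     = exp (a * b / \<sigma>\<^sup>2) * exp (-(x - (a+b))\<^sup>2/ (2 * \<sigma>\<^sup>2))"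
    unfolding exp_add[symmetric] exp_diff[symmetric]
    using sp by (intro arg_cong[where f=exp]) (simp add: field_simps power2_eq_square)
  have s: "sqrt (2 * pi * \<sigma>\<^sup>2) > 0" using sp by simp
  define C where "C = 1 / sqrt (2 * pi * \<sigma>\<^sup>2)"
  have C: "C > 0" using s by (simp add: C_def)
  have g: "(C * e1) * (C * e2) / (C * e0) = C * (e1 * e2 / e0)" if "e0 > 0" for e0 e1 e2 :: real
    using C that by (simp add: field_simps power2_eq_square)
  show ?thesis unfolding normal_density_def C_def[symmetric]
    by (subst g) (use e in auto)
qed

lemma cross_integral:
  assumes sp: "\<sigma> > 0"
  shows "integrable (Q n) (\<lambda>x. pdens n \<theta> \<sigma> x * pdens n \<eta> \<sigma> x / pdens n (\<lambda>_. 0) \<sigma> x)"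
    "(\<integral>x. pdens n \<theta> \<sigma> x * pdens n \<eta> \<sigma> x / pdens n (\<lambda>_. 0) \<sigma> x \<partial>Q n)
       = exp ((\<Sum>i<n. \<theta> i * \<eta> i) / \<sigma>\<^sup>2)"
proof -
  have eq: "pdens n \<theta> \<sigma> x * pdens n \<eta> \<sigma> x / pdens n (\<lambda>_. 0) \<sigma> x =
      (\<Prod>i<n. exp (\<theta> i * \<eta> i / \<sigma>\<^sup>2) * normal_density (\<theta> i + \<eta> i) \<sigma> (x i))" for x
    unfolding pdens_def prod.distrib[symmetric] prod_dividef[symmetric]
    using cross1[OF sp] by simp
  show "integrable (Q n) (\<lambda>x. pdens n \<theta> \<sigma> x * pdens n \<eta> \<sigma> x / pdens n (\<lambda>_. 0) \<sigma> x)"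
    unfolding eq
    by (rule product_sigma_finite.product_integrable_prod[OF psf_lborel]) (auto simp: sp integrable_normal_density)
  have "(\<integral>x. pdens n \<theta> \<sigma> x * pdens n \<eta> \<sigma> x / pdens n (\<lambda>_. 0) \<sigma> x \<partial>Q n)
      = (\<Prod>i<n. exp (\<theta> i * \<eta> i / \<sigma>\<^sup>2))"
    unfolding eq
    by (subst product_sigma_finite.product_integral_prod[OF psf_lborel]) (auto simp: sp integrable_normal_density integral_normal_density)
  also have "\<dots> = exp ((\<Sum>i<n. \<theta> i * \<eta> i) / \<sigma>\<^sup>2)"
    by (simp add: exp_sum sum_divide_distrib)
  finally show "(\<integral>x. pdens n \<theta> \<sigma> x * pdens n \<eta> \<sigma> x / pdens n (\<lambda>_. 0) \<sigma> x \<partial>Q n)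
       = exp ((\<Sum>i<n. \<theta> i * \<eta> i) / \<sigma>\<^sup>2)" .
qed

lemma pw_ineq:
  fixes p0 q f :: real
  assumes "p0 > 0" "0 \<le> f" "f \<le> 1" "q \<ge> 0"
  shows "p0 * f + q * (1 - f) \<ge> - p0 / 4 + 2 * q - q\<^sup>2 / p0"
proof -
  have a: "\<bar>q - p0\<bar> \<le> p0/4 + (q - p0)\<^sup>2 / p0"
  proof -
    have "p0 * \<bar>q - p0\<bar> \<le> p0\<^sup>2/4 + (q - p0)\<^sup>2"
      using sum_squares_ge_zero[of "\<bar>q - p0\<bar> - p0/2" 0]
      by (simp add: power2_eq_square algebra_simps abs_mult_self_eq)
    then show ?thesis using assms(1) by (simp add: field_simps power2_eq_square)
  qed
  have b: "p0 * f + q * (1 - f) = p0 + (1 - f) * (q - p0)" by (simp add: algebra_simps)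
  have c: "(1 - f) * (q - p0) \<ge> - \<bar>q - p0\<bar>"
  proof -
    have "\<bar>(1 - f) * (q - p0)\<bar> \<le> \<bar>q - p0\<bar>"
      using assms by (simp add: abs_mult mult_left_le_one_le)
    then show ?thesis by linarith
  qed
  have d: "(q - p0)\<^sup>2 / p0 = q\<^sup>2/p0 - 2*q + p0"
    using assms(1) by (simp add: field_simps power2_eq_square)
  show ?thesis using a b c d by linarith
qed

lemma key:
  fixes th :: "nat \<Rightarrow> nat \<Rightarrow> real" and J n :: nat
  assumes J: "J > 0" and sp: "\<sigma> > 0"
    and phm: "\<phi> \<in> borel_measurable (Q n)"
    and phb: "\<And>x. x \<in> space (Q n) \<Longrightarrow> 0 \<le> \<phi> x \<and> \<phi> x \<le> 1"
  shows "(\<integral>x. pdens n (\<lambda>_. 0) \<sigma> x * \<phi> x \<partial>Q n)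
     + (1/real J) * (\<Sum>j<J. \<integral>x. pdens n (th j) \<sigma> x * (1 - \<phi> x) \<partial>Q n)
     \<ge> 7/4 - (1/(real J)\<^sup>2) * (\<Sum>j<J. \<Sum>l<J. exp ((\<Sum>i<n. th j i * th l i) / \<sigma>\<^sup>2))"
proof -
  let ?z = "pdens n (\<lambda>_. 0) \<sigma>"
  let ?p = "\<lambda>j. pdens n (th j) \<sigma>"
  let ?R = "\<lambda>x. (1/(real J)\<^sup>2) * (\<Sum>j<J. \<Sum>l<J. ?p j x * ?p l x / ?z x)"
  let ?pb = "\<lambda>x. (1/real J) * (\<Sum>j<J. ?p j x)"
  have ip0: "integrable (Q n) ?z" using pdens_integrable[OF sp] .
  have ip: "integrable (Q n) (?p j)" for j using pdens_integrable[OF sp] .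
  have ip0f: "integrable (Q n) (\<lambda>x. ?z x * \<phi> x)"
    by (rule Bochner_Integration.integrable_bound[OF ip0])
       (use phm phb pdens_nonneg in \<open>auto intro!: AE_I2 mult_right_le_one_le simp: abs_mult\<close>)
  have ipf: "integrable (Q n) (\<lambda>x. ?p j x * (1 - \<phi> x))" for j
    by (rule Bochner_Integration.integrable_bound[OF ip])
       (use phm phb pdens_nonneg in \<open>auto intro!: AE_I2 mult_right_le_one_le simp: abs_mult\<close>)
  have icr: "integrable (Q n) (\<lambda>x. ?p j x * ?p l x / ?z x)" for j l
    using cross_integral(1)[OF sp] .
  have L: "(\<integral>x. ?z x * \<phi> x + (1/real J) * (\<Sum>j<J. ?p j x * (1 - \<phi> x)) \<partial>Q n)
     = (\<integral>x. ?z x * \<phi> x \<partial>Q n) + (1/real J) * (\<Sum>j<J. \<integral>x. ?p j x * (1 - \<phi> x) \<partial>Q n)"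
    using ip0f ipf by (simp add: integral_sum)
  have Rr: "(\<integral>x. - ?z x / 4 + 2 * ?pb x - ?R x \<partial>Q n)
     = 7/4 - (1/(real J)\<^sup>2) * (\<Sum>j<J. \<Sum>l<J. exp ((\<Sum>i<n. th j i * th l i) / \<sigma>\<^sup>2))"
  proof -
    have "(\<integral>x. - ?z x / 4 + 2 * ?pb x - ?R x \<partial>Q n)
      = - (\<integral>x. ?z x \<partial>Q n) / 4 + 2 * ((1/real J) * (\<Sum>j<J. \<integral>x. ?p j x \<partial>Q n))
        - (1/(real J)\<^sup>2) * (\<Sum>j<J. \<Sum>l<J. \<integral>x. ?p j x * ?p l x / ?z x \<partial>Q n)"
      using ip0 ip icr by (simp add: integral_sum integral_diff integral_add)
    also have "\<dots> = - 1/4 + 2 * ((1/real J) * real J) - (1/(real J)\<^sup>2) * (\<Sum>j<J. \<Sum>l<J. exp ((\<Sum>i<n. th j i * th l i) / \<sigma>\<^sup>2))"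
      using sp by (simp add: pdens_integral cross_integral(2))
    also have "\<dots> = 7/4 - (1/(real J)\<^sup>2) * (\<Sum>j<J. \<Sum>l<J. exp ((\<Sum>i<n. th j i * th l i) / \<sigma>\<^sup>2))"
      using J by simp
    finally show ?thesis .
  qed
  have mono: "(\<integral>x. - ?z x / 4 + 2 * ?pb x - ?R x \<partial>Q n)
      \<le> (\<integral>x. ?z x * \<phi> x + (1/real J) * (\<Sum>j<J. ?p j x * (1 - \<phi> x)) \<partial>Q n)"
  proof (rule integral_mono)
    show "integrable (Q n) (\<lambda>x. - ?z x / 4 + 2 * ?pb x - ?R x)"
      using ip0 ip icr by simp
    show "integrable (Q n) (\<lambda>x. ?z x * \<phi> x + (1/real J) * (\<Sum>j<J. ?p j x * (1 - \<phi> x)))"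
      using ip0f ipf by simp
    fix x assume x: "x \<in> space (Q n)"
    have p0p: "?z x > 0" using pdens_pos[OF sp] .
    have eqR: "?R x = (?pb x)\<^sup>2 / ?z x"
      by (simp add: power2_eq_square sum_product sum_divide_distrib sum_distrib_left field_simps)
    have eqL: "?z x * \<phi> x + (1/real J) * (\<Sum>j<J. ?p j x * (1 - \<phi> x)) = ?z x * \<phi> x + ?pb x * (1 - \<phi> x)"
      by (simp add: sum_distrib_right)
    have "?pb x \<ge> 0" by (simp add: pdens_nonneg sum_nonneg)
    then have "?z x * \<phi> x + ?pb x * (1 - \<phi> x) \<ge> - ?z x / 4 + 2 * ?pb x - (?pb x)\<^sup>2 / ?z x"
      using pw_ineq[OF p0p, of "\<phi> x" "?pb x"] phb[OF x] by blast
    then show "- ?z x / 4 + 2 * ?pb x - ?R x \<le> ?z x * \<phi> x + (1/real J) * (\<Sum>j<J. ?p j x * (1 - \<phi> x))"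
      unfolding eqR eqL by linarith
  qed
  show ?thesis using L Rr mono by linarith
qed

lemma sum_if_lt: "k \<le> n \<Longrightarrow> (\<Sum>i<n. if i < k then c else 0) = real k * (c::real)"
proof -
  assume k: "k \<le> n"
  have "(\<Sum>i<n. if i < k then c else 0) = (\<Sum>i\<in>{i\<in>{..<n}. i < k}. c)"
    using sum.inter_filter[of "{..<n}" "\<lambda>_. c" "\<lambda>i. i<k"] by simp
  also have "{i\<in>{..<n}. i < k} = {..<k}" using k by auto
  finally show ?thesis by simp
qed

lemma exp_half_bound:
  fixes b :: real assumes b: "b \<ge> 0"
  shows "exp (b * (1/2)^d) - 1 \<le> (exp b - 1) * (1/2)^d"
proof (induction d)
  case 0 then show ?case by simp
next
  case (Suc d)
  define E where "E = exp (b * (1/2)^Suc d)"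
  have E1: "E \<ge> 1" unfolding E_def using b by simp
  have E2: "E * E = exp (b * (1/2)^d)" unfolding E_def exp_add[symmetric] by simp
  have h: "(E-1)*(E-1) \<ge> 0" by simp
  have h2: "E*E - 1 - 2*(E-1) = (E-1)*(E-1)" by (simp add: algebra_simps)
  have "E * E - 1 \<ge> 2 * (E - 1)" using h h2 by linarith
  then have "E - 1 \<le> (E * E - 1) / 2" by simp
  then have "E - 1 \<le> (exp (b * (1/2)^d) - 1) / 2" by (simp only: E2)
  also have "\<dots> \<le> (exp b - 1) * (1/2)^d / 2" using Suc by simp
  finally show ?case unfolding E_def by simp
qed

lemma geo1: "(\<Sum>l\<le>j. (1/2::real)^(j-l)) \<le> 2"
proof -
  have "(\<Sum>l\<le>j. (1/2::real)^(j-l)) = 2 - (1/2)^j"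
  proof (induction j)
    case 0 then show ?case by simp
  next
    case (Suc j)
    have "(\<Sum>l\<le>Suc j. (1/2::real)^(Suc j-l)) = (\<Sum>l\<le>j. (1/2::real)^(Suc j-l)) + 1"
      by simp
    also have "(\<Sum>l\<le>j. (1/2::real)^(Suc j-l)) = (1/2) * (\<Sum>l\<le>j. (1/2::real)^(j-l))"
      by (simp add: sum_distrib_left Suc_diff_le)
    finally show ?case using Suc by simp
  qed
  then show ?thesis by simp
qed

lemma geo0: "(\<Sum>l<k. (1/2::real)^l) = 2 - 2 * (1/2)^k"
  by (induction k) auto

lemma geo2: "(\<Sum>l\<in>{j<..<J}. (1/2::real)^(l-j)) \<le> 1"
proof (induction J)
  case 0 then show ?case by simp
next
  case (Suc J)
  show ?case
  proof (cases "J \<le> j")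
    case True
    then have "{j<..<Suc J} = {}" by auto
    then show ?thesis by simp
  next
    case False
    have "(\<Sum>l\<in>{j<..<Suc J}. (1/2::real)^(l-j)) = (\<Sum>l\<in>{j<..<J}. (1/2::real)^(l-j)) + (1/2)^(J-j)"
    proof -
      have "{j<..<Suc J} = insert J {j<..<J}" using False by auto
      then show ?thesis by (simp add: add.commute)
    qed
    also have "(\<Sum>l\<in>{j<..<J}. (1/2::real)^(l-j)) \<le> 1 - (1/2)^(J-j)"
    proof -
      have "(\<Sum>l\<in>{j<..<J}. (1/2::real)^(l-j)) = (\<Sum>l\<in>{0<..<J-j}. (1/2::real)^l)"
        using False by (intro sum.reindex_bij_witness[where i="\<lambda>l. l + j" and j="\<lambda>l. l - j"]) auto
      also have "\<dots> = (\<Sum>l<J-j. (1/2::real)^l) - 1"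
      proof -
        have "{..<J-j} = insert 0 {0<..<J-j}" using False by auto
        then show ?thesis by simp
      qed
      also have "(\<Sum>l<J-j. (1/2::real)^l) = 2 - 2 * (1/2)^(J-j)"
        by (rule geo0)
      finally show ?thesis by simp
    qed
    finally show ?thesis by simp
  qed
qed

definition Dd :: "nat \<Rightarrow> nat \<Rightarrow> real" where
  "Dd j l = (1/2)^(j-l) * (1/2)^(l-j)"

lemma Dd_nonneg: "Dd j l \<ge> 0" by (simp add: Dd_def)

lemma Dd_sum: "(\<Sum>l<J. Dd j l) \<le> 3"
proof -
  have sp: "{..<J} \<subseteq> {..j} \<union> {j<..<J}" by auto
  have "(\<Sum>l<J. Dd j l) \<le> (\<Sum>l\<in>{..j} \<union> {j<..<J}. Dd j l)"
    by (rule sum_mono2) (use sp Dd_nonneg in auto)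
  also have "\<dots> = (\<Sum>l\<le>j. Dd j l) + (\<Sum>l\<in>{j<..<J}. Dd j l)"
    by (rule sum.union_disjoint) auto
  also have "(\<Sum>l\<le>j. Dd j l) = (\<Sum>l\<le>j. (1/2::real)^(j-l))"
    by (intro sum.cong) (auto simp: Dd_def)
  also have "(\<Sum>l\<in>{j<..<J}. Dd j l) = (\<Sum>l\<in>{j<..<J}. (1/2::real)^(l-j))"
    by (intro sum.cong) (auto simp: Dd_def)
  finally show ?thesis using geo1[of j] geo2[of j J] by linarith
qed

lemma double_sum_bound:
  fixes b :: real and J :: nat
  assumes J: "J > 0" and b: "exp b = 1 + real J / 100" and b0: "b \<ge> 0"
  shows "(1/(real J)\<^sup>2) * (\<Sum>j<J. \<Sum>l<J. exp (b * Dd j l)) \<le> 103/100"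
proof -
  have e: "exp (b * Dd j l) \<le> 1 + real J / 100 * Dd j l" for j l
  proof -
    have "Dd j l = (1/2)^(if j \<le> l then l - j else j - l)" by (simp add: Dd_def)
    then show ?thesis using exp_half_bound[OF b0, of "if j \<le> l then l - j else j - l"] b by simp
  qed
  have "(\<Sum>j<J. \<Sum>l<J. exp (b * Dd j l)) \<le> (\<Sum>j<J. \<Sum>l<J. 1 + real J / 100 * Dd j l)"
    by (intro sum_mono e)
  also have "\<dots> = (\<Sum>j<J. real J + real J / 100 * (\<Sum>l<J. Dd j l))"
    by (simp add: sum.distrib sum_distrib_left)
  also have "\<dots> \<le> (\<Sum>j<J. real J + real J / 100 * 3)"
    by (intro sum_mono add_left_mono mult_left_mono Dd_sum) auto
  also have "\<dots> = (real J)\<^sup>2 * (103/100)" by (simp add: power2_eq_square)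
  finally show ?thesis using J by (simp add: field_simps)
qed

definition thv :: "real \<Rightarrow> real \<Rightarrow> nat \<Rightarrow> nat \<Rightarrow> real" where
  "thv \<sigma> b j i = (if i < 4^j then \<sigma> * sqrt b / 2^j else 0)"

lemma pow4: "(4::real)^k = 2^k * 2^k"
  by (simp add: power_mult_distrib[symmetric])

lemma inner:
  assumes j: "4^j \<le> n" and l: "4^l \<le> n" and b: "b \<ge> 0"
  shows "(\<Sum>i<n. thv \<sigma> b j i * thv \<sigma> b l i) = \<sigma>\<^sup>2 * (b * Dd j l)"
proof -
  have mn: "(i < 4^j \<and> i < 4^l) \<longleftrightarrow> i < (4::nat)^(min j l)" for i
  proof (cases "j \<le> l")
    case True
    have "(4::nat)^j \<le> 4^l" by (rule power_increasing) (use True in auto)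
    then show ?thesis using True by (auto simp: min_def intro: less_le_trans)
  next
    case False
    have "(4::nat)^l \<le> 4^j" by (rule power_increasing) (use False in auto)
    then show ?thesis using False by (auto simp: min_def intro: less_le_trans)
  qed
  have "(\<Sum>i<n. thv \<sigma> b j i * thv \<sigma> b l i) = (\<Sum>i<n. if i < 4^(min j l) then \<sigma>\<^sup>2 * b / (2^j * 2^l) else 0)"
    apply (intro sum.cong refl)
    using b mn by (auto simp: thv_def power2_eq_square)
  also have "\<dots> = real (4^(min j l)) * (\<sigma>\<^sup>2 * b / (2^j * 2^l))"
    by (rule sum_if_lt) (use j l in \<open>auto simp: min_def\<close>)
  also have "\<dots> = \<sigma>\<^sup>2 * (b * Dd j l)"
  proof (cases "j \<le> l")
    case True
    have "(2::real)^l = 2^j * 2^(l-j)" using True by (simp add: power_add[symmetric])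
    then show ?thesis using True
      by (simp add: min_def Dd_def pow4 power_one_over field_simps)
  next
    case False
    have "(2::real)^j = 2^l * 2^(j-l)" using False by (simp add: power_add[symmetric])
    then show ?thesis using False
      by (simp add: min_def Dd_def pow4 power_one_over field_simps)
  qed
  finally show ?thesis .
qed

lemma exist_m: assumes "n \<ge> (2::nat)" shows "\<exists>m. 2 * 4^m \<le> n \<and> n < 2 * 4^(Suc m)"
proof -
  have b: "\<forall>y. 2 * 4^y \<le> n \<longrightarrow> y \<le> n"
  proof (intro allI impI)
    fix y assume "2 * 4^y \<le> n"
    moreover have "y < 2^y" by (rule less_exp)
    moreover have "(2::nat)^y \<le> 4^y" by (rule power_mono) auto
    ultimately show "y \<le> n" by linarith
  qed
  have ex: "\<exists>x. 2 * 4^x \<le> n \<and> (\<forall>y. 2 * 4^y \<le> n \<longrightarrow> y \<le> x)"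
  proof (rule Nat.ex_has_greatest_nat[where k=0 and b=n])
    show "2 * 4^0 \<le> n" using assms by simp
    show "\<forall>y. 2 * 4^y \<le> n \<longrightarrow> y \<le> n" using b .
  qed
  obtain m where m: "2 * 4^m \<le> n" "\<forall>y. 2 * 4^y \<le> n \<longrightarrow> y \<le> m"
    using ex by blast
  have "\<not> 2 * 4^(Suc m) \<le> n"
  proof
    assume "2 * 4^(Suc m) \<le> n"
    then have "Suc m \<le> m" using m(2) by blast
    then show False by simp
  qed
  then show ?thesis using m by auto
qed

lemma ln_bound:
  assumes "n < 2 * 4^J" "J \<ge> 1"
  shows "ln (16 * real n) < 7 * real J"
proof (cases "n = 0")
  case True then show ?thesis using assms by simp
next
  case False
  have "real n < real (2 * 4^J)" using assms(1) by (simp only: of_nat_less_iff)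
  then have "16 * real n < 32 * 4^J" by simp
  also have "(32::real) * 4^J = 2^(5 + 2*J)" by (simp add: power_add power_mult)
  also have "(2::real)^(5+2*J) \<le> (exp 1)^(5+2*J)"
    by (rule power_mono) (use exp_ge_add_one_self[of 1] in auto)
  also have "\<dots> = exp (real (5 + 2*J))" using exp_of_nat_mult[of "5+2*J" "1::real"] by simp
  also have "\<dots> \<le> exp (7 * real J)" using assms(2) by simp
  finally have "16 * real n < exp (7 * real J)" .
  moreover have "0 < 16 * real n" using False by simp
  ultimately show ?thesis using ln_less_cancel_iff[of "16*real n" "exp (7*real J)"] by simp
qed


lemma in_Theta2c:
  assumes sp: "\<sigma> > 0" and jn: "2 * 4^j \<le> n" and nJ: "n < 2 * 4^J" and J1: "J \<ge> 1"
    and eb: "exp b = 1 + real J / 100" and b0: "b \<ge> 0"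
  shows "thv \<sigma> b j \<in> Theta2c n \<sigma> (1/1000)"
proof -
  define \<mu> where "\<mu> = \<sigma> * sqrt b / 2^j"
  have th: "\<forall>i<n. thv \<sigma> b j i = (if i < 4^j then \<mu> else 0)"
    by (simp add: thv_def \<mu>_def)
  have a1: "4^j \<le> n" using jn by simp
  have mn: "min (4^j) (n - 4^j) = (4::nat)^j" using jn by simp
  have mu2: "(0 - \<mu>)\<^sup>2 * real ((4::nat)^j) = \<sigma>\<^sup>2 * b"
  proof -
    have "(0 - \<mu>)\<^sup>2 = \<sigma>\<^sup>2 * (sqrt b)\<^sup>2 / ((2::real)^j)\<^sup>2"
      by (simp add: \<mu>_def power_divide power_mult_distrib)
    also have "(sqrt b)\<^sup>2 = b" using b0 by simp
    also have "((2::real)^j)\<^sup>2 = real ((4::nat)^j)"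
      by (simp add: pow4 power2_eq_square)
    finally show ?thesis by simp
  qed
  have "(1::nat) \<le> 4^j" by simp
  then have "n \<ge> 2" using jn by linarith
  then have Lpos: "0 < ln (16 * real n)" by (intro ln_gt_zero) simp
  have L: "ln (16 * real n) < 7 * real J" using ln_bound[OF nJ J1] .
  have "1 + real 1000 * (real J / 100) \<le> (1 + real J / 100) ^ 1000"
    by (rule Bernoulli_inequality) simp
  also have "(1 + real J / 100) ^ 1000 = exp (1000 * b)"
    using eb exp_of_nat_mult[of 1000 b] by simp
  finally have "7 * real J < exp (1000 * b)" using J1 by simp
  with L have "ln (16 * real n) < exp (1000 * b)" by linarith
  then have "ln (ln (16 * real n)) < 1000 * b"
    using Lpos ln_less_cancel_iff[of "ln (16 * real n)" "exp (1000 * b)"] by simp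
  then have "1/1000 * \<sigma>\<^sup>2 * ln (ln (16 * real n)) < \<sigma>\<^sup>2 * b"
    using sp by (simp add: field_simps)
  then have cond: "(0 - \<mu>)\<^sup>2 * real (min (4^j) (n - 4^j)) > 1/1000 * \<sigma>\<^sup>2 * ln (ln (16 * real n))"
    using mu2 mn by simp
  show ?thesis unfolding Theta2c_def Theta2_def
    using a1 th cond by blast
qed

theorem mainTheorem8:
  shows "\<exists>c::real. c > 0 \<and> (\<exists>c1::real. 0 < c1 \<and> c1 < 1 \<and>
    (\<forall>n::nat. n \<ge> 2 \<longrightarrow> (\<forall>\<sigma>::real. \<sigma> > 0 \<longrightarrow> (\<forall>\<phi>. is_test n \<phi> \<longrightarrow>
      (SUP \<theta>\<in>Theta1 n. \<integral>x. \<phi> x \<partial>gauss_meas n \<theta> \<sigma>)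
      + (SUP \<theta>\<in>Theta2c n \<sigma> c. \<integral>x. (1 - \<phi> x) \<partial>gauss_meas n \<theta> \<sigma>) \<ge> c1))))"
proof -
  have main: "(SUP \<theta>\<in>Theta1 n. \<integral>x. \<phi> x \<partial>gauss_meas n \<theta> \<sigma>)
      + (SUP \<theta>\<in>Theta2c n \<sigma> (1/1000). \<integral>x. (1 - \<phi> x) \<partial>gauss_meas n \<theta> \<sigma>) \<ge> 1/2"
    if n: "n \<ge> 2" and sp: "\<sigma> > 0" and t: "is_test n \<phi>" for n \<sigma> \<phi>
  proof -
    obtain m where m: "2*4^m \<le> n" "n < 2*4^Suc m" using exist_m[OF n] by blast
    define J where "J = Suc m"
    define b where "b = ln (1 + real J / 100)"
    have J0: "J > 0" "J \<ge> 1" by (auto simp: J_def)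
    have eb: "exp b = 1 + real J / 100" unfolding b_def by (simp add: add_pos_nonneg)
    have b0: "b \<ge> 0" unfolding b_def by simp
    have jn: "2 * 4^j \<le> n" if "j < J" for j
    proof -
      have "(4::nat)^j \<le> 4^m" by (rule power_increasing) (use that in \<open>auto simp: J_def\<close>)
      then show ?thesis using m(1) by linarith
    qed
    have nJ: "n < 2 * 4^J" using m(2) by (simp add: J_def)
    have phm: "\<phi> \<in> borel_measurable (Q n)" using t by (simp add: is_test_def)
    have phb: "\<And>x. x \<in> space (Q n) \<Longrightarrow> 0 \<le> \<phi> x \<and> \<phi> x \<le> 1" using t by (simp add: is_test_def)
    let ?E = "\<lambda>\<theta>. \<integral>x. \<phi> x \<partial>gauss_meas n \<theta> \<sigma>"
    let ?F = "\<lambda>\<theta>. \<integral>x. (1 - \<phi> x) \<partial>gauss_meas n \<theta> \<sigma>"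
    have bdd1: "bdd_above (?E ` Theta1 n)"
      by (rule bdd_aboveI2[where M=1]) (rule test_le1(1)[OF sp t])
    have bdd2: "bdd_above (?F ` Theta2c n \<sigma> (1/1000))"
      by (rule bdd_aboveI2[where M=1]) (rule test_le1(2)[OF sp t])
    have S1: "?E (\<lambda>_. 0) \<le> (SUP \<theta>\<in>Theta1 n. ?E \<theta>)"
      by (rule cSUP_upper[OF _ bdd1]) (simp add: Theta1_def)
    have S2: "?F (thv \<sigma> b j) \<le> (SUP \<theta>\<in>Theta2c n \<sigma> (1/1000). ?F \<theta>)" if "j < J" for j
      by (rule cSUP_upper[OF _ bdd2]) (rule in_Theta2c[OF sp jn[OF that] nJ J0(2) eb b0])
    have avg: "(1/real J) * (\<Sum>j<J. ?F (thv \<sigma> b j)) \<le> (SUP \<theta>\<in>Theta2c n \<sigma> (1/1000). ?F \<theta>)"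
    proof -
      have "(\<Sum>j<J. ?F (thv \<sigma> b j)) \<le> (\<Sum>j<J. (SUP \<theta>\<in>Theta2c n \<sigma> (1/1000). ?F \<theta>))"
        by (rule sum_mono) (use S2 in auto)
      then show ?thesis using J0 by (simp add: field_simps)
    qed
    have E0: "?E (\<lambda>_. 0) = (\<integral>x. pdens n (\<lambda>_. 0) \<sigma> x * \<phi> x \<partial>Q n)"
      by (rule expect_eq[OF sp phm])
    have Fj: "?F (thv \<sigma> b j) = (\<integral>x. pdens n (thv \<sigma> b j) \<sigma> x * (1 - \<phi> x) \<partial>Q n)" for j
      by (rule expect_eq[OF sp]) (use phm in simp)
    have K: "(\<integral>x. pdens n (\<lambda>_. 0) \<sigma> x * \<phi> x \<partial>Q n)
     + (1/real J) * (\<Sum>j<J. \<integral>x. pdens n (thv \<sigma> b j) \<sigma> x * (1 - \<phi> x) \<partial>Q n)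
     \<ge> 7/4 - (1/(real J)\<^sup>2) * (\<Sum>j<J. \<Sum>l<J. exp ((\<Sum>i<n. thv \<sigma> b j i * thv \<sigma> b l i) / \<sigma>\<^sup>2))"
      by (rule key[OF J0(1) sp phm phb])
    have inn: "(\<Sum>j<J. \<Sum>l<J. exp ((\<Sum>i<n. thv \<sigma> b j i * thv \<sigma> b l i) / \<sigma>\<^sup>2))
        = (\<Sum>j<J. \<Sum>l<J. exp (b * Dd j l))"
    proof (intro sum.cong refl)
      fix j l assume jl: "j \<in> {..<J}" "l \<in> {..<J}"
      have "2 * 4^j \<le> n" "2 * 4^l \<le> n" using jn jl by auto
      then have "4^j \<le> n" "4^l \<le> n" by linarith+
      then show "exp ((\<Sum>i<n. thv \<sigma> b j i * thv \<sigma> b l i) / \<sigma>\<^sup>2) = exp (b * Dd j l)"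
        using inner[of j n l b \<sigma>] b0 sp by simp
    qed
    have DS: "(1/(real J)\<^sup>2) * (\<Sum>j<J. \<Sum>l<J. exp (b * Dd j l)) \<le> 103/100"
      by (rule double_sum_bound[OF J0(1) eb b0])
    show ?thesis
      using S1 avg E0 Fj K inn DS by simp
  qed
  show ?thesis
    by (rule exI[of _ "1/1000"], simp, rule exI[of _ "1/2"], simp) (use main in auto)
qed

end
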